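(* Let $H$ be a fixed connected graph, $\{G_n\}$ a sequence of graphs with $N(H,G_n)>0$, and $p_n\in(0,1)$ with $\limsup_np_n<1$. Then: (a) There is a constant $c=c_H>0$ such that $\mathbb P(T(H,G_n)=0)\ge e^{-cp_n^{|V(H)|}N(H,G_n)}$ for all $n$ large enough. (b) If $\liminf_{n\to\infty}\mathbb P(T(H,G_n)=0)>0$, then $\hat N(H,G_n)$ is not consistent for $N(H,G_n)$ and $Z(H,G_n)$ is not asymptotically normal.
   Context: $G_n$ is a simple labeled graph on $V(G_n)=\{1,\dots,|V(G_n)|\}$ with adjacency $(a_{ij})$; $H=(V(H),E(H))$ with $|Aut(H)|$ automorphisms. $V(G_n)_k$ is the set of $k$-tuples of distinct vertices. $M_H(\mathbf s)=\prod_{(i,j)\in E(H)}a_{s_is_j}$, $N(H,G_n)=\frac1{|Aut(H)|}\sum_{\mathbf s\in V(G_n)_{|V(H)|}}M_H(\mathbf s)$. $\{X_v\}$ i.i.d. Bernoulli$(p_n)$, $X_{\mathbf s}=\prod_uX_{s_u}$, $T(H,G_n)=\frac1{|Aut(H)|}\sum_{\mathbf s}M_H(\mathbf s)X_{\mathbf s}$, $\hat N(H,G_n)=p_n^{-|V(H)|}T(H,G_n)$, $Z(H,G_n)=(T(H,G_n)-p_n^{|V(H)|}N(H,G_n))/\sqrt{\mathrm{Var}[T(H,G_n)]}$. Consistency: $\hat N/N\to1$ in probability; asymptotic normality: $Z\to N(0,1)$ in distribution. *)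

theory Defs
  imports "HOL-Probability.Probability" "HOL-Combinatorics.Permutations"
begin

definition simple_graph :: "nat \<Rightarrow> (nat \<Rightarrow> nat \<Rightarrow> bool) \<Rightarrow> bool" where
  "simple_graph n A \<longleftrightarrow>
     (\<forall>i j. A i j \<longrightarrow> i \<in> {1..n} \<and> j \<in> {1..n} \<and> A j i \<and> i \<noteq> j)"

definition connected_graph :: "nat \<Rightarrow> (nat \<Rightarrow> nat \<Rightarrow> bool) \<Rightarrow> bool" where
  "connected_graph k E \<longleftrightarrow> simple_graph k E \<and> 1 \<le> k \<and>
     (\<forall>u\<in>{1..k}. \<forall>v\<in>{1..k}. E\<^sup>*\<^sup>* u v)"

definition aut_count :: "nat \<Rightarrow> (nat \<Rightarrow> nat \<Rightarrow> bool) \<Rightarrow> nat" where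
  "aut_count k E = card {\<sigma>. \<sigma> permutes {1..k} \<and>
      (\<forall>i\<in>{1..k}. \<forall>j\<in>{1..k}. E (\<sigma> i) (\<sigma> j) \<longleftrightarrow> E i j)}"

definition edge_set :: "nat \<Rightarrow> (nat \<Rightarrow> nat \<Rightarrow> bool) \<Rightarrow> (nat \<times> nat) set" where
  "edge_set k E = {(i,j). i \<in> {1..k} \<and> j \<in> {1..k} \<and> i < j \<and> E i j}"

definition inj_tuples :: "nat \<Rightarrow> nat \<Rightarrow> (nat \<Rightarrow> nat) set" where
  "inj_tuples k n = {s \<in> {1..k} \<rightarrow>\<^sub>E {1..n}. inj_on s {1..k}}"

definition hom_M :: "nat \<Rightarrow> (nat \<Rightarrow> nat \<Rightarrow> bool) \<Rightarrow> (nat \<Rightarrow> nat \<Rightarrow> bool) \<Rightarrow> (nat \<Rightarrow> nat) \<Rightarrow> real" where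
  "hom_M k E A s = (\<Prod>(i,j)\<in>edge_set k E. if A (s i) (s j) then 1 else 0)"

definition sub_count :: "nat \<Rightarrow> (nat \<Rightarrow> nat \<Rightarrow> bool) \<Rightarrow> nat \<Rightarrow> (nat \<Rightarrow> nat \<Rightarrow> bool) \<Rightarrow> real" where
  "sub_count k E n A = (1 / real (aut_count k E)) * (\<Sum>s\<in>inj_tuples k n. hom_M k E A s)"

definition X_tuple :: "nat \<Rightarrow> (nat \<Rightarrow> bool) \<Rightarrow> (nat \<Rightarrow> nat) \<Rightarrow> real" where
  "X_tuple k x s = (\<Prod>u\<in>{1..k}. if x (s u) then 1 else 0)"

definition T_count :: "nat \<Rightarrow> (nat \<Rightarrow> nat \<Rightarrow> bool) \<Rightarrow> nat \<Rightarrow> (nat \<Rightarrow> nat \<Rightarrow> bool) \<Rightarrow> (nat \<Rightarrow> bool) \<Rightarrow> real" where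
  "T_count k E n A x = (1 / real (aut_count k E)) * (\<Sum>s\<in>inj_tuples k n. hom_M k E A s * X_tuple k x s)"

definition vertex_sampling :: "nat \<Rightarrow> real \<Rightarrow> (nat \<Rightarrow> bool) pmf" where
  "vertex_sampling n p = Pi_pmf {1..n} False (\<lambda>_. bernoulli_pmf p)"

definition N_hat :: "nat \<Rightarrow> (nat \<Rightarrow> nat \<Rightarrow> bool) \<Rightarrow> nat \<Rightarrow> (nat \<Rightarrow> nat \<Rightarrow> bool) \<Rightarrow> real \<Rightarrow> (nat \<Rightarrow> bool) \<Rightarrow> real" where
  "N_hat k E n A p x = T_count k E n A x / p ^ k"

definition Z_stat :: "nat \<Rightarrow> (nat \<Rightarrow> nat \<Rightarrow> bool) \<Rightarrow> nat \<Rightarrow> (nat \<Rightarrow> nat \<Rightarrow> bool) \<Rightarrow> real \<Rightarrow> (nat \<Rightarrow> bool) \<Rightarrow> real" where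
  "Z_stat k E n A p x = (T_count k E n A x - p ^ k * sub_count k E n A) /
      sqrt (measure_pmf.variance (vertex_sampling n p) (T_count k E n A))"

definition consistent_est :: "nat \<Rightarrow> (nat \<Rightarrow> nat \<Rightarrow> bool) \<Rightarrow> (nat \<Rightarrow> nat) \<Rightarrow> (nat \<Rightarrow> nat \<Rightarrow> nat \<Rightarrow> bool) \<Rightarrow> (nat \<Rightarrow> real) \<Rightarrow> bool" where
  "consistent_est k E V A p \<longleftrightarrow>
    (\<forall>\<epsilon>>0. (\<lambda>n. measure_pmf.prob (vertex_sampling (V n) (p n))
        {x. \<bar>N_hat k E (V n) (A n) (p n) x / sub_count k E (V n) (A n) - 1\<bar> > \<epsilon>}) \<longlonglongrightarrow> 0)"

definition asymp_normal :: "nat \<Rightarrow> (nat \<Rightarrow> nat \<Rightarrow> bool) \<Rightarrow> (nat \<Rightarrow> nat) \<Rightarrow> (nat \<Rightarrow> nat \<Rightarrow> nat \<Rightarrow> bool) \<Rightarrow> (nat \<Rightarrow> real) \<Rightarrow> bool" where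
  "asymp_normal k E V A p \<longleftrightarrow>
    weak_conv_m (\<lambda>n. distr (measure_pmf (vertex_sampling (V n) (p n))) borel
                       (Z_stat k E (V n) (A n) (p n)))
                (density lborel std_normal_density)"

end

theory Submission
  imports Defs
begin


definition down :: "(nat \<Rightarrow> bool) set \<Rightarrow> bool" where
  "down S \<longleftrightarrow> (\<forall>x y. x \<in> S \<longrightarrow> (\<forall>v. y v \<longrightarrow> x v) \<longrightarrow> y \<in> S)"

lemma Pi_bern_decomp:
  assumes "finite I" "a \<notin> I" "0 \<le> p" "p \<le> 1"
  shows "measure_pmf.prob (Pi_pmf (insert a I) False (\<lambda>_. bernoulli_pmf p)) S =
     p * measure_pmf.prob (Pi_pmf I False (\<lambda>_. bernoulli_pmf p)) {r. r(a:=True) \<in> S}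
   + (1-p) * measure_pmf.prob (Pi_pmf I False (\<lambda>_. bernoulli_pmf p)) {r. r(a:=False) \<in> S}"
proof -
  let ?P = "Pi_pmf I False (\<lambda>_. bernoulli_pmf p)"
  have eq: "Pi_pmf (insert a I) False (\<lambda>_. bernoulli_pmf p) =
     bind_pmf (bernoulli_pmf p) (\<lambda>y. map_pmf (\<lambda>f. f(a:=y)) ?P)"
    using assms by (simp add: Pi_pmf_insert' map_pmf_def)
  have "emeasure (Pi_pmf (insert a I) False (\<lambda>_. bernoulli_pmf p)) S =
     emeasure ?P {r. r(a:=True) \<in> S} * ennreal p + emeasure ?P {r. r(a:=False) \<in> S} * ennreal (1-p)"
    unfolding eq using assms by (simp add: emeasure_map_pmf[symmetric] vimage_def)
  then show ?thesis using assms
    by (simp add: measure_pmf.emeasure_eq_measure ennreal_mult'[symmetric] ennreal_plus[symmetric] del: ennreal_plus)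
qed

lemma down_slice: assumes "down A" shows "down {r. r(a:=y) \<in> A}"
  unfolding down_def
proof (intro allI impI)
  fix x z
  assume "x \<in> {r. r(a:=y) \<in> A}" "\<forall>v. z v \<longrightarrow> x v"
  then have "\<forall>v. (z(a:=y)) v \<longrightarrow> (x(a:=y)) v" "x(a:=y) \<in> A" by auto
  then show "z \<in> {r. r(a:=y) \<in> A}" using assms unfolding down_def by blast
qed

lemma down_Int: "down A \<Longrightarrow> down B \<Longrightarrow> down (A \<inter> B)"
  unfolding down_def by blast

lemma down_slice_mono: assumes "down A" shows "{r. r(a:=True) \<in> A} \<subseteq> {r. r(a:=False) \<in> A}"
proof
  fix x
  assume "x \<in> {r. r(a:=True) \<in> A}"
  moreover have "\<forall>v. (x(a:=False)) v \<longrightarrow> (x(a:=True)) v" by auto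
  ultimately show "x \<in> {r. r(a:=False) \<in> A}" using assms unfolding down_def by blast
qed

lemma alg_step:
  fixes p a11 a00 x1 x0 y1 y0 :: real
  assumes "0 \<le> p" "p \<le> 1" "a11 \<ge> x1 * y1" "a00 \<ge> x0 * y0" "x1 \<le> x0" "y1 \<le> y0"
  shows "p * a11 + (1-p) * a00 \<ge> (p * x1 + (1-p) * x0) * (p * y1 + (1-p) * y0)"
proof -
  have "(p * x1 + (1-p) * x0) * (p * y1 + (1-p) * y0) = p * (x1*y1) + (1-p)*(x0*y0) - p*(1-p)*((x0-x1)*(y0-y1))"
    by (simp add: algebra_simps)
  moreover have "p*(1-p)*((x0-x1)*(y0-y1)) \<ge> 0" using assms by simp
  moreover have "p * (x1*y1) \<le> p * a11" using assms by (simp add: mult_left_mono)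
  moreover have "(1-p) * (x0*y0) \<le> (1-p) * a00" using assms by (simp add: mult_left_mono)
  ultimately show ?thesis by linarith
qed

lemma harris:
  assumes "finite I" "0 \<le> p" "p \<le> 1"
  shows "down A \<Longrightarrow> down B \<Longrightarrow>
    measure_pmf.prob (Pi_pmf I False (\<lambda>_. bernoulli_pmf p)) (A \<inter> B) \<ge>
    measure_pmf.prob (Pi_pmf I False (\<lambda>_. bernoulli_pmf p)) A *
    measure_pmf.prob (Pi_pmf I False (\<lambda>_. bernoulli_pmf p)) B"
  using assms(1)
proof (induction I arbitrary: A B rule: finite_induct)
  case empty
  then show ?case by (simp add: indicator_def)
next
  case (insert a I)
  let ?P = "Pi_pmf I False (\<lambda>_. bernoulli_pmf p)"
  let ?pr = "measure_pmf.prob ?P"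
  have sl: "{r. r(a:=y) \<in> A \<inter> B} = {r. r(a:=y) \<in> A} \<inter> {r. r(a:=y) \<in> B}" for y by auto
  have h1: "?pr ({r. r(a:=y) \<in> A} \<inter> {r. r(a:=y) \<in> B}) \<ge> ?pr {r. r(a:=y) \<in> A} * ?pr {r. r(a:=y) \<in> B}" for y
    using insert by (intro insert.IH down_slice) auto
  have m1: "?pr {r. r(a:=True) \<in> A} \<le> ?pr {r. r(a:=False) \<in> A}"
    using insert down_slice_mono[of A a] by (intro measure_pmf.finite_measure_mono) auto
  have m2: "?pr {r. r(a:=True) \<in> B} \<le> ?pr {r. r(a:=False) \<in> B}"
    using insert down_slice_mono[of B a] by (intro measure_pmf.finite_measure_mono) auto
  show ?case
    unfolding Pi_bern_decomp[OF insert(1,2) assms(2,3)] sl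
    by (rule alg_step[OF assms(2,3) h1 h1 m1 m2])
qed

lemma harris_prod:
  assumes "finite I" "0 \<le> p" "p \<le> 1" "finite J" "\<And>j. j \<in> J \<Longrightarrow> down (D j)"
  shows "measure_pmf.prob (Pi_pmf I False (\<lambda>_. bernoulli_pmf p)) (\<Inter>j\<in>J. D j) \<ge>
    (\<Prod>j\<in>J. measure_pmf.prob (Pi_pmf I False (\<lambda>_. bernoulli_pmf p)) (D j))"
  using assms(4,5)
proof (induction J rule: finite_induct)
  case empty
  then show ?case by simp
next
  case (insert j J)
  let ?pr = "measure_pmf.prob (Pi_pmf I False (\<lambda>_. bernoulli_pmf p))"
  have dJ: "down (\<Inter>j\<in>J. D j)" using insert.prems unfolding down_def by blast
  have "(\<Prod>j\<in>insert j J. ?pr (D j)) = ?pr (D j) * (\<Prod>j\<in>J. ?pr (D j))" using insert by simp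
  also have "\<dots> \<le> ?pr (D j) * ?pr (\<Inter>j\<in>J. D j)"
    using insert by (intro mult_left_mono) auto
  also have "\<dots> \<le> ?pr (D j \<inter> (\<Inter>j\<in>J. D j))"
    using harris[OF assms(1-3) insert.prems[of j] dJ] by simp
  finally show ?case by simp
qed



lemma prod_ind01:
  assumes "finite S"
  shows "(\<Prod>x\<in>S. if P x then 1 else 0 :: real) = (if \<forall>x\<in>S. P x then 1 else 0)"
proof (cases "\<forall>x\<in>S. P x")
  case True then show ?thesis by simp
next
  case False
  then obtain y where "y \<in> S" "\<not> P y" by blast
  then show ?thesis using assms False by (intro trans[OF prod_zero]) auto
qed

lemma finite_edge_set: "finite (edge_set k E)"
  by (rule finite_subset[of _ "{1..k} \<times> {1..k}"]) (auto simp: edge_set_def)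

lemma hom_M_eq: "hom_M k E A s = (if \<forall>(i,j)\<in>edge_set k E. A (s i) (s j) then 1 else 0)"
  unfolding hom_M_def case_prod_beta
  by (subst prod_ind01[OF finite_edge_set]) auto

lemma X_tuple_eq: "X_tuple k x s = (if \<forall>u\<in>{1..k}. x (s u) then 1 else 0)"
  unfolding X_tuple_def by (subst prod_ind01) auto

lemma aut_pos: "aut_count k E > 0"
proof -
  have "finite {\<sigma>. \<sigma> permutes {1..k} \<and>
      (\<forall>i\<in>{1..k}. \<forall>j\<in>{1..k}. E (\<sigma> i) (\<sigma> j) \<longleftrightarrow> E i j)}"
    by (rule finite_subset[OF _ finite_permutations[of "{1..k}"]]) auto
  moreover have "id \<in> {\<sigma>. \<sigma> permutes {1..k} \<and>
      (\<forall>i\<in>{1..k}. \<forall>j\<in>{1..k}. E (\<sigma> i) (\<sigma> j) \<longleftrightarrow> E i j)}"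
    by (simp add: permutes_id)
  ultimately show ?thesis unfolding aut_count_def
    by (subst card_gt_0_iff) blast
qed

lemma finite_inj_tuples: "finite (inj_tuples k n)"
  unfolding inj_tuples_def by (rule finite_subset[OF _ finite_PiE[of "{1..k}" "\<lambda>_. {1..n}"]]) auto

definition good :: "nat \<Rightarrow> (nat \<Rightarrow> nat \<Rightarrow> bool) \<Rightarrow> nat \<Rightarrow> (nat \<Rightarrow> nat \<Rightarrow> bool) \<Rightarrow> (nat \<Rightarrow> nat) set" where
  "good k E n A = {s \<in> inj_tuples k n. hom_M k E A s \<noteq> 0}"

lemma T_zero_iff:
  "T_count k E n A x = 0 \<longleftrightarrow> (\<forall>s\<in>good k E n A. \<not> (\<forall>u\<in>{1..k}. x (s u)))"
proof -
  have "T_count k E n A x = 0 \<longleftrightarrow> (\<Sum>s\<in>inj_tuples k n. hom_M k E A s * X_tuple k x s) = 0"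
    unfolding T_count_def using aut_pos[of k E] by simp
  also have "\<dots> \<longleftrightarrow> (\<forall>s\<in>inj_tuples k n. hom_M k E A s * X_tuple k x s = 0)"
    by (rule sum_nonneg_eq_0_iff[OF finite_inj_tuples]) (simp add: hom_M_eq X_tuple_eq)
  also have "\<dots> \<longleftrightarrow> (\<forall>s\<in>good k E n A. \<not> (\<forall>u\<in>{1..k}. x (s u)))"
    unfolding good_def by (auto simp: X_tuple_eq)
  finally show ?thesis .
qed

lemma card_good: "real (card (good k E n A)) = real (aut_count k E) * sub_count k E n A"
proof -
  have "(\<Sum>s\<in>inj_tuples k n. hom_M k E A s) = (\<Sum>s\<in>inj_tuples k n. if hom_M k E A s \<noteq> 0 then 1 else 0)"
    by (intro sum.cong) (auto simp: hom_M_eq)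
  also have "\<dots> = (\<Sum>s\<in>good k E n A. 1)"
    unfolding good_def by (rule sum.inter_filter[symmetric, OF finite_inj_tuples])
  finally have "(\<Sum>s\<in>inj_tuples k n. hom_M k E A s) = (\<Sum>s\<in>good k E n A. 1)" .
  then show ?thesis unfolding sub_count_def using aut_pos[of k E] by simp
qed

lemma prob_all_present:
  assumes "s \<in> inj_tuples k n" "0 \<le> p" "p \<le> 1"
  shows "measure_pmf.prob (vertex_sampling n p) {x. \<forall>u\<in>{1..k}. x (s u)} = p ^ k"
proof -
  define S where "S = s ` {1..k}"
  have S: "S \<subseteq> {1..n}" "card S = k"
    using assms(1) unfolding S_def inj_tuples_def by (auto simp: card_image)
  have "{x. \<forall>u\<in>{1..k}. x (s u)} = Pi {1..n} (\<lambda>v. if v \<in> S then {True} else UNIV)"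
    using S(1) unfolding S_def Pi_def by auto
  then have "measure_pmf.prob (vertex_sampling n p) {x. \<forall>u\<in>{1..k}. x (s u)}
     = (\<Prod>v\<in>{1..n}. measure_pmf.prob (bernoulli_pmf p) (if v \<in> S then {True} else UNIV))"
    unfolding vertex_sampling_def by (simp add: measure_Pi_pmf_Pi)
  also have "\<dots> = (\<Prod>v\<in>{1..n}. if v \<in> S then p else 1)"
    using assms by (intro prod.cong) (auto simp: measure_pmf_single)
  also have "\<dots> = p ^ card ({1..n} \<inter> S)"
    by (simp add: prod.If_cases)
  also have "{1..n} \<inter> S = S" using S by auto
  finally show ?thesis using S by simp
qed



lemma exp_bound1:
  fixes q q0 :: real
  assumes "0 \<le> q" "q \<le> q0" "q0 < 1"
  shows "exp (- (q / (1 - q0))) \<le> 1 - q"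
proof -
  have q1: "q < 1" using assms by simp
  have "1 + q / (1 - q) \<le> exp (q / (1 - q))" by (rule exp_ge_add_one_self)
  moreover have "1 + q / (1 - q) = 1 / (1 - q)" using q1 by (simp add: field_simps)
  ultimately have "1 / (1 - q) \<le> exp (q / (1 - q))" by simp
  then have "exp (- (q / (1 - q))) \<le> 1 - q" using q1
    by (simp add: exp_minus field_simps)
  moreover have "q / (1 - q) \<le> q / (1 - q0)"
    using assms q1 by (intro divide_left_mono) auto
  ultimately show ?thesis by (meson exp_le_cancel_iff neg_le_iff_le order_trans)
qed

lemma exp_bound_pow:
  fixes q q0 :: real
  assumes "0 \<le> q" "q \<le> q0" "q0 < 1"
  shows "exp (- (real m * q / (1 - q0))) \<le> (1 - q) ^ m"
proof -
  have "exp (- (real m * q / (1 - q0))) = exp (- (q / (1 - q0))) ^ m"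
    by (simp add: exp_of_nat_mult[symmetric])
  also have "\<dots> \<le> (1 - q) ^ m"
    using exp_bound1[OF assms] by (intro power_mono) auto
  finally show ?thesis .
qed

lemma std_density_le1: "std_normal_density x \<le> 1"
proof -
  have "exp (- x\<^sup>2 / 2) \<le> 1" by simp
  moreover have "1 / sqrt (2 * pi) \<le> 1" using pi_gt3 by (simp add: field_simps)
  ultimately show ?thesis unfolding std_normal_density_def
    by (metis exp_gt_zero less_eq_real_def mult_le_one zero_le_divide_1_iff real_sqrt_ge_zero
        pi_ge_zero mult_nonneg_nonneg zero_le_numeral)
qed

lemma std_emeasure_le:
  assumes "S \<in> sets borel"
  shows "emeasure (density lborel std_normal_density) S \<le> emeasure lborel S"
proof -
  have "emeasure (density lborel std_normal_density) S = (\<integral>\<^sup>+x. ennreal (std_normal_density x) * indicator S x \<partial>lborel)"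
    using assms by (simp add: emeasure_density)
  also have "\<dots> \<le> (\<integral>\<^sup>+x. indicator S x \<partial>lborel)"
    by (intro nn_integral_mono) (auto simp: indicator_def std_density_le1)
  also have "\<dots> = emeasure lborel S" using assms by simp
  finally show ?thesis .
qed

lemma std_cdf_lip:
  assumes "a \<le> b"
  shows "cdf (density lborel std_normal_density) b - cdf (density lborel std_normal_density) a \<le> b - a"
proof (cases "a = b")
  case True then show ?thesis by simp
next
  case False
  interpret real_distribution "density lborel std_normal_density" by (rule real_dist_normal_dist)
  have "cdf (density lborel std_normal_density) b - cdf (density lborel std_normal_density) a
     = measure (density lborel std_normal_density) {a<..b}"
    using assms False by (intro cdf_diff_eq) auto
  also have "\<dots> \<le> b - a"
  proof -
    have "emeasure (density lborel std_normal_density) {a<..b} \<le> ennreal (b - a)"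
      using std_emeasure_le[of "{a<..b}"] assms by simp
    then show ?thesis
      using assms by (simp add: emeasure_eq_measure)
  qed
  finally show ?thesis .
qed

lemma std_cdf_cont: "isCont (cdf (density lborel std_normal_density)) x"
proof -
  interpret real_distribution "density lborel std_normal_density" by (rule real_dist_normal_dist)
  have "emeasure (density lborel std_normal_density) {x} \<le> 0"
    using std_emeasure_le[of "{x}"] by simp
  then have "measure (density lborel std_normal_density) {x} = 0"
    by (simp add: emeasure_eq_measure)
  then show ?thesis by (simp add: isCont_cdf)
qed

lemma cdf_distr_pmf:
  "cdf (distr (measure_pmf M) borel (Z :: _ \<Rightarrow> real)) x = measure_pmf.prob M {w. Z w \<le> x}"
  unfolding cdf_def by (subst measure_distr) (auto simp: vimage_def)

lemma no_atom_conv: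
  fixes M :: "nat \<Rightarrow> 'a pmf" and Z :: "nat \<Rightarrow> 'a \<Rightarrow> real"
  assumes dpos: "\<delta> > 0"
    and atom: "\<forall>\<^sub>F n in sequentially. \<exists>z. measure_pmf.prob (M n) {w. Z n w = z} > \<delta>"
  shows "\<not> weak_conv_m (\<lambda>n. distr (measure_pmf (M n)) borel (Z n)) (density lborel std_normal_density)"
proof
  assume wc: "weak_conv_m (\<lambda>n. distr (measure_pmf (M n)) borel (Z n)) (density lborel std_normal_density)"
  interpret N: real_distribution "density lborel std_normal_density" by (rule real_dist_normal_dist)
  define \<Phi> where "\<Phi> = cdf (density lborel std_normal_density)"
  define F where "F n x = measure_pmf.prob (M n) {w. Z n w \<le> x}" for n x
  have conv: "(\<lambda>n. F n x) \<longlonglongrightarrow> \<Phi> x" for x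
    using wc std_cdf_cont[of x] unfolding weak_conv_m_def weak_conv_def F_def \<Phi>_def cdf_distr_pmf
    by blast
  define \<epsilon> where "\<epsilon> = \<delta> / 4"
  have ep: "\<epsilon> > 0" using dpos by (simp add: \<epsilon>_def)
  have "\<forall>\<^sub>F x in at_bot. \<Phi> x < \<epsilon>"
    using order_tendstoD(2)[OF N.cdf_lim_at_bot ep] unfolding \<Phi>_def .
  then obtain b where b: "\<And>x. x \<le> b \<Longrightarrow> \<Phi> x < \<epsilon>" by (auto simp: eventually_at_bot_linorder)
  have "\<forall>\<^sub>F x in at_top. \<Phi> x > 1 - \<epsilon>"
    using order_tendstoD(1)[OF N.cdf_lim_at_top_prob] ep unfolding \<Phi>_def by simp
  then obtain t where t: "\<And>x. x \<ge> t \<Longrightarrow> \<Phi> x > 1 - \<epsilon>" by (auto simp: eventually_at_top_linorder)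
  define L where "L = \<bar>b\<bar> + \<bar>t\<bar> + 1"
  have L: "L > 0" "\<Phi> (-L) < \<epsilon>" "\<And>x. x \<ge> L \<Longrightarrow> \<Phi> x > 1 - \<epsilon>"
    using b[of "-L"] t unfolding L_def by auto
  define K where "K = nat \<lceil>2 * L / \<epsilon>\<rceil>"
  define g where "g i = - L + real i * \<epsilon>" for i :: nat
  have gK: "g K \<ge> L"
  proof -
    have "real K \<ge> 2 * L / \<epsilon>" unfolding K_def using dpos by linarith
    then have "real K * \<epsilon> \<ge> 2 * L" using ep by (simp add: field_simps)
    then show ?thesis unfolding g_def by simp
  qed
  have ev1: "\<forall>\<^sub>F n in sequentially. \<forall>i\<in>{..K}. \<bar>F n (g i) - \<Phi> (g i)\<bar> < \<epsilon>"
  proof (rule eventually_ball_finite)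
    show "\<forall>i\<in>{..K}. \<forall>\<^sub>F n in sequentially. \<bar>F n (g i) - \<Phi> (g i)\<bar> < \<epsilon>"
      using tendstoD[OF conv ep] by (simp add: dist_real_def)
  qed simp
  obtain n where n1: "\<forall>i\<in>{..K}. \<bar>F n (g i) - \<Phi> (g i)\<bar> < \<epsilon>"
    and n2: "\<exists>z. measure_pmf.prob (M n) {w. Z n w = z} > \<delta>"
    using eventually_happens'[OF sequentially_bot eventually_conj[OF ev1 atom]] by blast
  from n2 obtain z where z: "measure_pmf.prob (M n) {w. Z n w = z} > \<delta>" by blast
  let ?P = "measure_pmf.prob (M n)"
  have Fge: "F n x \<ge> ?P {w. Z n w = z}" if "z \<le> x" for x
    unfolding F_def using that by (intro measure_pmf.finite_measure_mono) auto
  have Fle: "F n x \<le> 1 - ?P {w. Z n w = z}" if "x < z" for x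
  proof -
    have "F n x \<le> ?P (UNIV - {w. Z n w = z})"
      unfolding F_def using that by (intro measure_pmf.finite_measure_mono) auto
    also have "\<dots> = 1 - ?P {w. Z n w = z}" using measure_pmf.prob_compl[of "{w. Z n w = z}" "M n"] by simp
    finally show ?thesis .
  qed
  have Fjump: "F n y \<ge> F n x + ?P {w. Z n w = z}" if "x < z" "z \<le> y" for x y
  proof -
    have "F n x + ?P {w. Z n w = z} = ?P ({w. Z n w \<le> x} \<union> {w. Z n w = z})"
      unfolding F_def using that by (subst measure_pmf.finite_measure_Union) auto
    also have "\<dots> \<le> F n y" unfolding F_def using that
      by (intro measure_pmf.finite_measure_mono) auto
    finally show ?thesis .
  qed
  have g0: "g 0 = -L" by (simp add: g_def)
  show False
  proof (cases "z \<le> g 0")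
    case True
    have "F n (g 0) > \<delta>" using Fge[OF True] z by simp
    moreover have "\<bar>F n (g 0) - \<Phi> (g 0)\<bar> < \<epsilon>" using n1 by blast
    then have "F n (g 0) < \<Phi> (g 0) + \<epsilon>" by (simp add: abs_less_iff)
    ultimately show False using L(2) unfolding g0 \<epsilon>_def using dpos by linarith
  next
    case False
    show False
    proof (cases "z > g K")
      case True
      have "F n (g K) < 1 - \<delta>" using Fle[OF True] z by simp
      moreover have "\<bar>F n (g K) - \<Phi> (g K)\<bar> < \<epsilon>" using n1 by blast
      then have "F n (g K) > \<Phi> (g K) - \<epsilon>" by (simp add: abs_less_iff)
      ultimately show False using L(3)[OF gK] unfolding \<epsilon>_def using dpos by linarith
    next
      case False2: False
      define m where "m = nat \<lceil>(z + L) / \<epsilon>\<rceil>"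
      have zL: "z + L > 0" using False g0 by simp
      have "real m = of_int \<lceil>(z + L) / \<epsilon>\<rceil>" using zL ep unfolding m_def by simp
      then have m1: "real m \<ge> (z + L) / \<epsilon>" "real m < (z + L) / \<epsilon> + 1"
        using ceiling_correct[of "(z + L) / \<epsilon>"] by linarith+
      have "(z + L) / \<epsilon> > 0" using zL ep by simp
      then have "real m > 0" using m1(1) by linarith
      then have mpos: "m \<ge> 1" by simp
      have mK: "m \<le> K"
      proof -
        have "z + L \<le> real K * \<epsilon>" using False2 by (simp add: g_def)
        then have "(z + L) / \<epsilon> \<le> real K" using ep by (simp add: field_simps)
        then show ?thesis unfolding m_def by (simp add: ceiling_le)
      qed
      have gm: "g m \<ge> z" using m1(1) ep by (simp add: g_def field_simps)
      have gm1: "g (m - 1) < z"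
      proof -
        have "real (m - 1) = real m - 1" using mpos by simp
        then have "real (m - 1) < (z + L) / \<epsilon>" using m1(2) by simp
        then have "real (m - 1) * \<epsilon> < z + L" using ep by (simp add: field_simps)
        then show ?thesis by (simp add: g_def)
      qed
      have gdiff: "g m - g (m - 1) = \<epsilon>" using mpos by (simp add: g_def of_nat_diff algebra_simps)
      have "F n (g m) \<ge> F n (g (m - 1)) + ?P {w. Z n w = z}" by (rule Fjump[OF gm1 gm])
      moreover have "\<bar>F n (g m) - \<Phi> (g m)\<bar> < \<epsilon>" "\<bar>F n (g (m-1)) - \<Phi> (g (m-1))\<bar> < \<epsilon>"
        using n1 mK by (simp_all del: g_def)
      moreover have "\<Phi> (g m) - \<Phi> (g (m - 1)) \<le> \<epsilon>"
        using std_cdf_lip[of "g (m-1)" "g m"] gdiff ep unfolding \<Phi>_def by simp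
      ultimately show False using z unfolding \<epsilon>_def using dpos by linarith
    qed
  qed
qed


lemma T0_lower:
  assumes "0 \<le> p" "p \<le> 1"
  shows "measure_pmf.prob (vertex_sampling n p) {x. T_count k E n A x = 0} \<ge> (1 - p ^ k) ^ card (good k E n A)"
proof -
  define D where "D s = {x. \<not> (\<forall>u\<in>{1..k}. x (s u))}" for s :: "nat \<Rightarrow> nat"
  have eq: "{x. T_count k E n A x = 0} = (\<Inter>s\<in>good k E n A. D s)"
    unfolding D_def by (auto simp: T_zero_iff)
  have fin: "finite (good k E n A)" unfolding good_def using finite_inj_tuples by simp
  have dn: "down (D s)" for s unfolding down_def D_def by blast
  have pD: "measure_pmf.prob (vertex_sampling n p) (D s) = 1 - p ^ k" if "s \<in> good k E n A" for s
  proof -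
    have "D s = UNIV - {x. \<forall>u\<in>{1..k}. x (s u)}" unfolding D_def by auto
    then show ?thesis
      using measure_pmf.prob_compl[of "{x. \<forall>u\<in>{1..k}. x (s u)}" "vertex_sampling n p"]
        prob_all_present[of s k n p] that assms unfolding good_def by simp
  qed
  have "(\<Prod>s\<in>good k E n A. measure_pmf.prob (vertex_sampling n p) (D s)) \<le>
        measure_pmf.prob (vertex_sampling n p) (\<Inter>s\<in>good k E n A. D s)"
    unfolding vertex_sampling_def by (rule harris_prod[OF _ assms fin dn]) simp
  moreover have "(\<Prod>s\<in>good k E n A. measure_pmf.prob (vertex_sampling n p) (D s)) = (1 - p ^ k) ^ card (good k E n A)"
    using pD by simp
  ultimately show ?thesis using eq by simp
qed

theorem lemma6p1:
  fixes k :: nat and EH :: "nat \<Rightarrow> nat \<Rightarrow> bool"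
    and V :: "nat \<Rightarrow> nat" and A :: "nat \<Rightarrow> nat \<Rightarrow> nat \<Rightarrow> bool" and p :: "nat \<Rightarrow> real"
  assumes H: "connected_graph k EH"
    and G: "\<And>n. simple_graph (V n) (A n)"
    and Npos: "\<And>n. sub_count k EH (V n) (A n) > 0"
    and p01: "\<And>n. 0 < p n \<and> p n < 1"
    and plim: "limsup (\<lambda>n. ereal (p n)) < 1"
  shows "(\<exists>c>0. \<forall>\<^sub>F n in sequentially.
            measure_pmf.prob (vertex_sampling (V n) (p n)) {x. T_count k EH (V n) (A n) x = 0}
              \<ge> exp (- c * p n ^ k * sub_count k EH (V n) (A n)))
       \<and> (liminf (\<lambda>n. ereal (measure_pmf.prob (vertex_sampling (V n) (p n))
                 {x. T_count k EH (V n) (A n) x = 0})) > 0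
          \<longrightarrow> \<not> consistent_est k EH V A p \<and> \<not> asymp_normal k EH V A p)"
proof
  let ?P = "\<lambda>n. measure_pmf.prob (vertex_sampling (V n) (p n)) {x. T_count k EH (V n) (A n) x = 0}"
  obtain p0 :: real where p0: "limsup (\<lambda>n. ereal (p n)) < ereal p0" "ereal p0 < 1"
    using ereal_dense2[OF plim] by blast
  have evp: "\<forall>\<^sub>F n in sequentially. p n < p0"
    using Limsup_lessD[OF p0(1)] by simp
  obtain n0 where "p n0 < p0" using eventually_happens'[OF sequentially_bot evp] by blast
  then have p0pos: "p0 > 0" using p01[of n0] by simp
  have p01': "p0 < 1" using p0(2) by simp
  define q0 where "q0 = p0 ^ k"
  have k1: "k \<ge> 1" using H unfolding connected_graph_def by simp
  have q0: "0 \<le> q0" "q0 < 1" unfolding q0_def using p0pos p01' k1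
    by (auto simp: power_less_one_iff)
  define c where "c = real (aut_count k EH) / (1 - q0)"
  have cpos: "c > 0" unfolding c_def using aut_pos[of k EH] q0 by simp
  show "\<exists>c>0. \<forall>\<^sub>F n in sequentially. ?P n \<ge> exp (- c * p n ^ k * sub_count k EH (V n) (A n))"
  proof (rule exI[of _ c], rule conjI[OF cpos])
    show "\<forall>\<^sub>F n in sequentially. ?P n \<ge> exp (- c * p n ^ k * sub_count k EH (V n) (A n))"
      using evp
    proof eventually_elim
      case (elim n)
      have pn: "0 \<le> p n" "p n \<le> 1" using p01[of n] by auto
      have qle: "p n ^ k \<le> q0" unfolding q0_def using elim pn by (intro power_mono) auto
      have "exp (- c * p n ^ k * sub_count k EH (V n) (A n)) =
            exp (- (real (card (good k EH (V n) (A n))) * p n ^ k / (1 - q0)))"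
        unfolding c_def card_good by (simp add: mult_ac)
      also have "\<dots> \<le> (1 - p n ^ k) ^ card (good k EH (V n) (A n))"
        by (rule exp_bound_pow[OF _ qle q0(2)]) (use pn in simp)
      also have "\<dots> \<le> ?P n" by (rule T0_lower[OF pn])
      finally show ?case .
    qed
  qed
  show "liminf (\<lambda>n. ereal (?P n)) > 0 \<longrightarrow> \<not> consistent_est k EH V A p \<and> \<not> asymp_normal k EH V A p"
  proof
    assume lp: "liminf (\<lambda>n. ereal (?P n)) > 0"
    obtain \<delta> :: real where d: "0 < ereal \<delta>" "ereal \<delta> < liminf (\<lambda>n. ereal (?P n))"
      using ereal_dense2[OF lp] by blast
    have dpos: "\<delta> > 0" using d(1) by simp
    have evd: "\<forall>\<^sub>F n in sequentially. ?P n > \<delta>"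
      using less_LiminfD[OF d(2)] by simp
    have "\<not> consistent_est k EH V A p"
    proof
      assume ce: "consistent_est k EH V A p"
      have lim: "(\<lambda>n. measure_pmf.prob (vertex_sampling (V n) (p n))
        {x. \<bar>N_hat k EH (V n) (A n) (p n) x / sub_count k EH (V n) (A n) - 1\<bar> > 1/2}) \<longlonglongrightarrow> 0"
        using spec[OF ce[unfolded consistent_est_def], of "1/2::real"] by simp
      have "\<forall>\<^sub>F n in sequentially. measure_pmf.prob (vertex_sampling (V n) (p n))
        {x. \<bar>N_hat k EH (V n) (A n) (p n) x / sub_count k EH (V n) (A n) - 1\<bar> > 1/2} < \<delta>"
        using order_tendstoD(2)[OF lim dpos] .
      then have "\<forall>\<^sub>F n in sequentially. False"
        using evd
      proof eventually_elim
        case (elim n)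
        have "?P n \<le> measure_pmf.prob (vertex_sampling (V n) (p n))
          {x. \<bar>N_hat k EH (V n) (A n) (p n) x / sub_count k EH (V n) (A n) - 1\<bar> > 1/2}"
          by (intro measure_pmf.finite_measure_mono) (auto simp: N_hat_def)
        then show ?case using elim by simp
      qed
      then show False by simp
    qed
    moreover have "\<not> asymp_normal k EH V A p"
      unfolding asymp_normal_def
    proof (rule no_atom_conv[OF dpos])
      show "\<forall>\<^sub>F n in sequentially. \<exists>z. measure_pmf.prob (vertex_sampling (V n) (p n))
              {w. Z_stat k EH (V n) (A n) (p n) w = z} > \<delta>"
        using evd
      proof eventually_elim
        case (elim n)
        let ?z = "(0 - p n ^ k * sub_count k EH (V n) (A n)) /
           sqrt (measure_pmf.variance (vertex_sampling (V n) (p n)) (T_count k EH (V n) (A n)))"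
        have "?P n \<le> measure_pmf.prob (vertex_sampling (V n) (p n))
              {w. Z_stat k EH (V n) (A n) (p n) w = ?z}"
          by (intro measure_pmf.finite_measure_mono) (auto simp: Z_stat_def)
        then have "\<delta> < measure_pmf.prob (vertex_sampling (V n) (p n))
              {w. Z_stat k EH (V n) (A n) (p n) w = ?z}" using elim by linarith
        then show ?case by blast
      qed
    qed
    ultimately show "\<not> consistent_est k EH V A p \<and> \<not> asymp_normal k EH V A p" by blast
  qed
qed

end
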